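(* Let $(r,\alpha,\beta,L,R)$ and $(r',\alpha',\beta',L',R')$ be $(m,n)$-allowed quintuples with $L\,\Pi(\alpha,\beta)\,R=L'\,\Pi(\alpha',\beta')\,R'$. Then $(r,\alpha,\beta,L,R)=(r',\alpha',\beta',L',R')$.
   Context: $\mathbb{F}$ is the field with two elements, $[n]=\{1,\dots,n\}$, $e_{n,i}$ standard basis column vectors, $I_n$ identity. $P_n=\{(i,j):i,j\in[n],i>j\}$; for transitive $T\subseteq P_n$ ($(i,j),(j,k)\in T\Rightarrow(i,k)\in T$), $L_n(T)=I_n+\mathrm{span}_{\mathbb{F}}\{e_{n,i}e_{n,j}^{\top}:(i,j)\in T\}$. $\Pi(\alpha,\beta)=\sum_{i=1}^re_{m,\alpha(i)}e_{n,\beta(i)}^{\top}\in\mathbb{F}^{m\times n}$. For increasing $\alpha:[r]\to[m]$, $T_L(\alpha)=\{(i,j):j\in\mathrm{Im}(\alpha),i>j\}\subseteq P_m$; for injective $\beta:[r]\to[n]$, $T_R(\beta)=\{(i,j):i\in\mathrm{Im}(\beta),j<i,j\notin\{\beta(1),\dots,\beta(\beta^{-1}(i)-1)\}\}$. A quintuple $(r,\alpha,\beta,L,R)$ is $(m,n)$-allowed if $r\le\min(m,n)$, $\alpha:[r]\to[m]$ is increasing, $\beta:[r]\to[n]$ is injective, $L\in L_m(T_L(\alpha))$, $R\in L_n(T_R(\beta))$. *)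

theory Defs
  imports "HOL-Library.Z2" "Jordan_Normal_Form.Matrix"
begin

text \<open>Indices are 0-based: the paper's index set [n] = {1..n} is rendered as {0..<n};
  maps alpha, beta : [r] -> [m] are rendered as lists of length r.\<close>

definition P_set :: "nat \<Rightarrow> (nat \<times> nat) set" where
  "P_set n = {(i, j). i < n \<and> j < n \<and> i > j}"

definition transitive_pos :: "(nat \<times> nat) set \<Rightarrow> bool" where
  "transitive_pos T \<longleftrightarrow> (\<forall>i j k. (i, j) \<in> T \<longrightarrow> (j, k) \<in> T \<longrightarrow> (i, k) \<in> T)"

definition Lgrp :: "nat \<Rightarrow> (nat \<times> nat) set \<Rightarrow> bit mat set" where
  "Lgrp n T = {one_mat n + A | A. A \<in> carrier_mat n n \<and>
      (\<forall>i<n. \<forall>j<n. (i, j) \<notin> T \<longrightarrow> A $$ (i, j) = 0)}"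

definition Pi_mat :: "nat \<Rightarrow> nat \<Rightarrow> nat list \<Rightarrow> nat list \<Rightarrow> bit mat" where
  "Pi_mat m n \<alpha> \<beta> = mat m n (\<lambda>(i, j).
      \<Sum>k<length \<alpha>. (if \<alpha> ! k = i \<and> \<beta> ! k = j then 1 else 0))"

definition T_L :: "nat \<Rightarrow> nat list \<Rightarrow> (nat \<times> nat) set" where
  "T_L m \<alpha> = {(i, j). i < m \<and> j \<in> set \<alpha> \<and> i > j}"

text \<open>T_R(beta) = {(i,j) : i in Im beta, j < i, j not in {beta(1),...,beta(beta^{-1}(i)-1)}};
  with i = beta(k) (0-based position k), the excluded set is the first k entries of beta.\<close>
definition T_R :: "nat list \<Rightarrow> (nat \<times> nat) set" where
  "T_R \<beta> = {(\<beta> ! k, j) | k j. k < length \<beta> \<and> j < \<beta> ! k \<and> j \<notin> set (take k \<beta>)}"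

definition allowed :: "nat \<Rightarrow> nat \<Rightarrow> nat \<Rightarrow> nat list \<Rightarrow> nat list \<Rightarrow> bit mat \<Rightarrow> bit mat \<Rightarrow> bool" where
  "allowed m n r \<alpha> \<beta> L R \<longleftrightarrow>
     r \<le> min m n \<and>
     length \<alpha> = r \<and> set \<alpha> \<subseteq> {0..<m} \<and> sorted_wrt (<) \<alpha> \<and>
     length \<beta> = r \<and> set \<beta> \<subseteq> {0..<n} \<and> distinct \<beta> \<and>
     L \<in> Lgrp m (T_L m \<alpha>) \<and> R \<in> Lgrp n (T_R \<beta>)"

end

theory Submission
  imports Defs
begin
lemma prod_entry:
  assumes L: "L \<in> carrier_mat m m" and R: "R \<in> carrier_mat n n"
    and la: "length \<alpha> = r" and lb: "length \<beta> = r"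
    and am: "set \<alpha> \<subseteq> {0..<m}" and bn: "set \<beta> \<subseteq> {0..<n}"
    and i: "i < m" and j: "j < n"
  shows "(L * Pi_mat m n \<alpha> \<beta> * R) $$ (i,j) = (\<Sum>k<r. L $$ (i, \<alpha>!k) * R $$ (\<beta>!k, j))"
proof -
  have 1: "(L * Pi_mat m n \<alpha> \<beta>) $$ (i,t) = (\<Sum>k<r. if \<beta>!k = t then L $$ (i, \<alpha>!k) else 0)" if t: "t < n" for t
  proof -
    have "(L * Pi_mat m n \<alpha> \<beta>) $$ (i,t) = (\<Sum>l<m. L $$ (i,l) * (\<Sum>k<r. (if \<alpha> ! k = l \<and> \<beta> ! k = t then 1 else 0)))"
      using L i t la by (simp add: Pi_mat_def scalar_prod_def lessThan_atLeast0 del: sum_of_bool_eq)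
    also have "\<dots> = (\<Sum>l<m. \<Sum>k<r. L $$ (i,l) * (if \<alpha> ! k = l \<and> \<beta> ! k = t then 1 else 0))"
      by (simp only: sum_distrib_left)
    also have "\<dots> = (\<Sum>k<r. \<Sum>l<m. L $$ (i,l) * (if \<alpha> ! k = l \<and> \<beta> ! k = t then 1 else 0))"
      by (rule sum.swap)
    also have "\<dots> = (\<Sum>k<r. \<Sum>l<m. (if \<alpha> ! k = l \<and> \<beta> ! k = t then L $$ (i,l) else 0))"
      by (intro sum.cong refl) simp
    also have "\<dots> = (\<Sum>k<r. if \<beta>!k = t then L $$ (i, \<alpha>!k) else 0)"
    proof (rule sum.cong[OF refl])
      fix k assume "k \<in> {..<r}"
      then have "\<alpha>!k < m" using am la by (auto dest!: nth_mem)
      then show "(\<Sum>l<m. (if \<alpha> ! k = l \<and> \<beta> ! k = t then L $$ (i,l) else 0)) = (if \<beta>!k = t then L $$ (i, \<alpha>!k) else 0)"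
        by (auto simp: sum.delta)
    qed
    finally show ?thesis .
  qed
  have "(L * Pi_mat m n \<alpha> \<beta> * R) $$ (i,j) = (\<Sum>t<n. (L * Pi_mat m n \<alpha> \<beta>) $$ (i,t) * R $$ (t,j))"
    using L R i j by (simp add: Pi_mat_def scalar_prod_def lessThan_atLeast0)
  also have "\<dots> = (\<Sum>t<n. (\<Sum>k<r. if \<beta>!k = t then L $$ (i, \<alpha>!k) else 0) * R $$ (t,j))"
    using 1 by simp
  also have "\<dots> = (\<Sum>k<r. \<Sum>t<n. if \<beta>!k = t then L $$ (i, \<alpha>!k) * R $$ (t,j) else 0)"
  proof -
    have "(\<Sum>t<n. (\<Sum>k<r. if \<beta>!k = t then L $$ (i, \<alpha>!k) else 0) * R $$ (t,j))
       = (\<Sum>t<n. \<Sum>k<r. (if \<beta>!k = t then L $$ (i, \<alpha>!k) else 0) * R $$ (t,j))"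
      by (simp only: sum_distrib_right)
    also have "\<dots> = (\<Sum>k<r. \<Sum>t<n. (if \<beta>!k = t then L $$ (i, \<alpha>!k) else 0) * R $$ (t,j))"
      by (rule sum.swap)
    also have "\<dots> = (\<Sum>k<r. \<Sum>t<n. if \<beta>!k = t then L $$ (i, \<alpha>!k) * R $$ (t,j) else 0)"
      by (intro sum.cong refl) simp
    finally show ?thesis .
  qed
  also have "\<dots> = (\<Sum>k<r. L $$ (i, \<alpha>!k) * R $$ (\<beta>!k, j))"
  proof (rule sum.cong[OF refl])
    fix k assume "k \<in> {..<r}"
    then have "\<beta>!k < n" using bn lb by (auto dest!: nth_mem)
    then show "(\<Sum>t<n. if \<beta>!k = t then L $$ (i, \<alpha>!k) * R $$ (t,j) else 0) = L $$ (i, \<alpha>!k) * R $$ (\<beta>!k, j)"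
      by (auto simp: sum.delta)
  qed
  finally show ?thesis .
qed

lemma key_step:
  fixes c c' v v' :: "nat \<Rightarrow> nat \<Rightarrow> bit" and a a' b b' :: "nat list"
  assumes la: "length a = r" and lb: "length b = r" and la': "length a' = r'" and lb': "length b' = r'"
    and sa: "sorted_wrt (<) a" and sa': "sorted_wrt (<) a'"
    and am: "set a \<subseteq> {0..<m}" and am': "set a' \<subseteq> {0..<m}"
    and bn: "set b \<subseteq> {0..<n}" and bn': "set b' \<subseteq> {0..<n}"
    and c1: "\<And>k. k < r \<Longrightarrow> c (a!k) k = 1" and c0: "\<And>k i. k < r \<Longrightarrow> i < a!k \<Longrightarrow> c i k = 0"
    and c1': "\<And>k. k < r' \<Longrightarrow> c' (a'!k) k = 1" and c0': "\<And>k i. k < r' \<Longrightarrow> i < a'!k \<Longrightarrow> c' i k = 0"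
    and v1: "\<And>k. k < r \<Longrightarrow> v k (b!k) = 1" and v0: "\<And>k j. k < r \<Longrightarrow> b!k < j \<Longrightarrow> j < n \<Longrightarrow> v k j = 0"
    and vp: "\<And>k k'. k < r \<Longrightarrow> k' < k \<Longrightarrow> v k (b!k') = 0"
    and v1': "\<And>k. k < r' \<Longrightarrow> v' k (b'!k) = 1" and v0': "\<And>k j. k < r' \<Longrightarrow> b'!k < j \<Longrightarrow> j < n \<Longrightarrow> v' k j = 0"
    and vp': "\<And>k k'. k < r' \<Longrightarrow> k' < k \<Longrightarrow> v' k (b'!k') = 0"
    and X: "\<And>i j. i < m \<Longrightarrow> j < n \<Longrightarrow> (\<Sum>k<r. c i k * v k j) = (\<Sum>k<r'. c' i k * v' k j)"
    and kr: "k < r" and kr': "k \<le> r'"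
    and IH: "\<And>k'. k' < k \<Longrightarrow> a!k' = a'!k' \<and> b!k' = b'!k' \<and> (\<forall>j<n. v k' j = v' k' j) \<and> (\<forall>i<m. c i k' = c' i k')"
  shows "k < r' \<and> a!k = a'!k \<and> b!k = b'!k \<and> (\<forall>j<n. v k j = v' k j) \<and> (\<forall>i<m. c i k = c' i k)"
proof -
  define Y where "Y i j = (\<Sum>q\<in>{k..<r}. c i q * v q j)" for i j
  define Y' where "Y' i j = (\<Sum>q\<in>{k..<r'}. c' i q * v' q j)" for i j
  have YY: "Y i j = Y' i j" if "i < m" "j < n" for i j
  proof -
    have s1: "(\<Sum>q<r. c i q * v q j) = (\<Sum>q<k. c i q * v q j) + Y i j"
      unfolding Y_def using kr by (metis lessThan_atLeast0 less_imp_le_nat sum.atLeastLessThan_concat zero_le)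
    have s2: "(\<Sum>q<r'. c' i q * v' q j) = (\<Sum>q<k. c' i q * v' q j) + Y' i j"
      unfolding Y'_def using kr' by (metis lessThan_atLeast0 sum.atLeastLessThan_concat zero_le)
    have s3: "(\<Sum>q<k. c i q * v q j) = (\<Sum>q<k. c' i q * v' q j)"
      using IH that by (intro sum.cong) auto
    show ?thesis using X[OF that] s1 s2 s3 by (metis add_left_cancel)
  qed
  have akm: "a!k < m" using am la kr by (auto dest!: nth_mem)
  have bkn: "b!k < n" using bn lb kr by (auto dest!: nth_mem)
  have Y1: "Y i j = 0" if "i < a!k" for i j
    unfolding Y_def
  proof (intro sum.neutral ballI)
    fix q assume q: "q \<in> {k..<r}"
    have "a!k \<le> a!q"
    proof (cases "k = q")
      case False
      then have "k < q" using q by auto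
      then show ?thesis using q sa la by (auto simp: sorted_wrt_iff_nth_less intro!: less_imp_le)
    qed simp
    then show "c i q * v q j = 0" using c0[of q i] q that by auto
  qed
  have Y2: "Y (a!k) j = v k j" for j
  proof -
    have "Y (a!k) j = c (a!k) k * v k j + (\<Sum>q\<in>{Suc k..<r}. c (a!k) q * v q j)"
      unfolding Y_def using kr by (rule sum.atLeast_Suc_lessThan)
    also have "(\<Sum>q\<in>{Suc k..<r}. c (a!k) q * v q j) = 0"
    proof (intro sum.neutral ballI)
      fix q assume q: "q \<in> {Suc k..<r}"
      have "a!k < a!q" using q sa la by (auto simp: sorted_wrt_iff_nth_less)
      then show "c (a!k) q * v q j = 0" using c0[of q "a!k"] q by auto
    qed
    finally show ?thesis using c1[OF kr] by simp
  qed
  have Y3: "Y i (b!k) = c i k" for i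
  proof -
    have "Y i (b!k) = c i k * v k (b!k) + (\<Sum>q\<in>{Suc k..<r}. c i q * v q (b!k))"
      unfolding Y_def using kr by (rule sum.atLeast_Suc_lessThan)
    also have "(\<Sum>q\<in>{Suc k..<r}. c i q * v q (b!k)) = 0"
      by (intro sum.neutral ballI) (auto simp: vp)
    finally show ?thesis using v1[OF kr] by simp
  qed
  have kr'': "k < r'"
  proof (rule ccontr)
    assume "\<not> k < r'"
    then have "Y' (a!k) (b!k) = 0" unfolding Y'_def using kr' by simp
    then show False using YY[OF akm bkn] Y2 v1[OF kr] by simp
  qed
  have akm': "a'!k < m" using am' la' kr'' by (auto dest!: nth_mem)
  have bkn': "b'!k < n" using bn' lb' kr'' by (auto dest!: nth_mem)
  have Y1': "Y' i j = 0" if "i < a'!k" for i j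
    unfolding Y'_def
  proof (intro sum.neutral ballI)
    fix q assume q: "q \<in> {k..<r'}"
    have "a'!k \<le> a'!q"
    proof (cases "k = q")
      case False
      then have "k < q" using q by auto
      then show ?thesis using q sa' la' by (auto simp: sorted_wrt_iff_nth_less intro!: less_imp_le)
    qed simp
    then show "c' i q * v' q j = 0" using c0'[of q i] q that by auto
  qed
  have Y2': "Y' (a'!k) j = v' k j" for j
  proof -
    have "Y' (a'!k) j = c' (a'!k) k * v' k j + (\<Sum>q\<in>{Suc k..<r'}. c' (a'!k) q * v' q j)"
      unfolding Y'_def using kr'' by (rule sum.atLeast_Suc_lessThan)
    also have "(\<Sum>q\<in>{Suc k..<r'}. c' (a'!k) q * v' q j) = 0"
    proof (intro sum.neutral ballI)
      fix q assume q: "q \<in> {Suc k..<r'}"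
      have "a'!k < a'!q" using q sa' la' by (auto simp: sorted_wrt_iff_nth_less)
      then show "c' (a'!k) q * v' q j = 0" using c0'[of q "a'!k"] q by auto
    qed
    finally show ?thesis using c1'[OF kr''] by simp
  qed
  have Y3': "Y' i (b'!k) = c' i k" for i
  proof -
    have "Y' i (b'!k) = c' i k * v' k (b'!k) + (\<Sum>q\<in>{Suc k..<r'}. c' i q * v' q (b'!k))"
      unfolding Y'_def using kr'' by (rule sum.atLeast_Suc_lessThan)
    also have "(\<Sum>q\<in>{Suc k..<r'}. c' i q * v' q (b'!k)) = 0"
      by (intro sum.neutral ballI) (auto simp: vp')
    finally show ?thesis using v1'[OF kr''] by simp
  qed
  have aeq: "a!k = a'!k"
  proof (rule ccontr)
    assume "a!k \<noteq> a'!k"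
    then consider "a!k < a'!k" | "a'!k < a!k" by linarith
    then show False
    proof cases
      case 1 then show False using Y1'[OF 1, of "b!k"] YY[OF akm bkn] Y2 v1[OF kr] by simp
    next
      case 2 then show False using Y1[OF 2, of "b'!k"] YY[OF akm' bkn'] Y2' v1'[OF kr''] by simp
    qed
  qed
  have veq: "\<forall>j<n. v k j = v' k j"
    using YY[OF akm] Y2 Y2' aeq by metis
  have beq: "b!k = b'!k"
  proof (rule ccontr)
    assume "b!k \<noteq> b'!k"
    then consider "b!k < b'!k" | "b'!k < b!k" by linarith
    then show False
    proof cases
      case 1 then show False using v0[OF kr 1 bkn'] veq bkn' v1'[OF kr''] by simp
    next
      case 2 then show False using v0'[OF kr'' 2 bkn] veq bkn v1[OF kr] by simp
    qed
  qed
  have ceq: "\<forall>i<m. c i k = c' i k"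
    using YY Y3 Y3' beq bkn by metis
  show ?thesis using kr'' aeq beq veq ceq by blast
qed


lemma Lgrp_entry:
  assumes "L \<in> Lgrp n T"
  shows "L \<in> carrier_mat n n" "\<And>i j. i < n \<Longrightarrow> j < n \<Longrightarrow> (i,j) \<notin> T \<Longrightarrow> L $$ (i,j) = (if i = j then 1 else 0)"
proof -
  obtain A where A: "L = one_mat n + A" "A \<in> carrier_mat n n"
    "\<forall>i<n. \<forall>j<n. (i, j) \<notin> T \<longrightarrow> A $$ (i, j) = 0"
    using assms unfolding Lgrp_def by blast
  show "L \<in> carrier_mat n n" using A by simp
  fix i j assume "i < n" "j < n" "(i,j) \<notin> T"
  then show "L $$ (i,j) = (if i = j then 1 else 0)" using A by simp
qed

lemma data_props:
  assumes "allowed m n r \<alpha> \<beta> L R"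
  shows "L \<in> carrier_mat m m" "R \<in> carrier_mat n n"
    "\<And>k. k < r \<Longrightarrow> L $$ (\<alpha>!k, \<alpha>!k) = 1"
    "\<And>k i. k < r \<Longrightarrow> i < \<alpha>!k \<Longrightarrow> L $$ (i, \<alpha>!k) = 0"
    "\<And>k. k < r \<Longrightarrow> R $$ (\<beta>!k, \<beta>!k) = 1"
    "\<And>k j. k < r \<Longrightarrow> \<beta>!k < j \<Longrightarrow> j < n \<Longrightarrow> R $$ (\<beta>!k, j) = 0"
    "\<And>k k'. k < r \<Longrightarrow> k' < k \<Longrightarrow> R $$ (\<beta>!k, \<beta>!k') = 0"
    "\<And>i j. i < m \<Longrightarrow> j < m \<Longrightarrow> j \<notin> set \<alpha> \<Longrightarrow> L $$ (i,j) = (if i = j then 1 else 0)"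
    "\<And>i j. i < n \<Longrightarrow> j < n \<Longrightarrow> i \<notin> set \<beta> \<Longrightarrow> R $$ (i,j) = (if i = j then 1 else 0)"
proof -
  have al: "r \<le> min m n" "length \<alpha> = r" "set \<alpha> \<subseteq> {0..<m}" "sorted_wrt (<) \<alpha>"
     "length \<beta> = r" "set \<beta> \<subseteq> {0..<n}" "distinct \<beta>"
     and LL: "L \<in> Lgrp m (T_L m \<alpha>)" and RR: "R \<in> Lgrp n (T_R \<beta>)"
    using assms unfolding allowed_def by auto
  have am: "\<And>k. k < r \<Longrightarrow> \<alpha>!k < m" by (metis al(2,3) atLeastLessThan_iff nth_mem subsetD)
  have bn: "\<And>k. k < r \<Longrightarrow> \<beta>!k < n" by (metis al(5,6) atLeastLessThan_iff nth_mem subsetD)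
  note LE = Lgrp_entry[OF LL] and RE = Lgrp_entry[OF RR]
  show "L \<in> carrier_mat m m" "R \<in> carrier_mat n n" using LE RE by auto
  show "\<And>k. k < r \<Longrightarrow> L $$ (\<alpha>!k, \<alpha>!k) = 1"
  proof -
    fix k assume "k < r"
    then show "L $$ (\<alpha>!k, \<alpha>!k) = 1" using LE(2)[of "\<alpha>!k" "\<alpha>!k"] am[of k] by (simp add: T_L_def)
  qed
  show "\<And>k i. k < r \<Longrightarrow> i < \<alpha>!k \<Longrightarrow> L $$ (i, \<alpha>!k) = 0"
  proof -
    fix k i assume "k < r" "i < \<alpha>!k"
    then show "L $$ (i, \<alpha>!k) = 0" using LE(2)[of i "\<alpha>!k"] am[of k] by (simp add: T_L_def)
  qed
  have TR: "(x,y) \<in> T_R \<beta> \<Longrightarrow> y < x" for x y unfolding T_R_def by auto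
  show "\<And>k. k < r \<Longrightarrow> R $$ (\<beta>!k, \<beta>!k) = 1"
  proof -
    fix k assume "k < r"
    then show "R $$ (\<beta>!k, \<beta>!k) = 1" using RE(2)[of "\<beta>!k" "\<beta>!k"] bn[of k] TR[of "\<beta>!k" "\<beta>!k"] by auto
  qed
  show "\<And>k j. k < r \<Longrightarrow> \<beta>!k < j \<Longrightarrow> j < n \<Longrightarrow> R $$ (\<beta>!k, j) = 0"
  proof -
    fix k j assume "k < r" "\<beta>!k < j" "j < n"
    then show "R $$ (\<beta>!k, j) = 0" using RE(2)[of "\<beta>!k" j] bn[of k] TR[of "\<beta>!k" j] by (cases "(\<beta>!k, j) \<in> T_R \<beta>") auto
  qed
  show "\<And>k k'. k < r \<Longrightarrow> k' < k \<Longrightarrow> R $$ (\<beta>!k, \<beta>!k') = 0"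
  proof -
    fix k k' assume kk: "k < r" "k' < k"
    have ne: "\<beta>!k \<noteq> \<beta>!k'" using kk al by (simp add: nth_eq_iff_index_eq)
    have "(\<beta>!k, \<beta>!k') \<notin> T_R \<beta>"
    proof
      assume "(\<beta>!k, \<beta>!k') \<in> T_R \<beta>"
      then obtain k0 where k0: "k0 < r" "\<beta>!k = \<beta>!k0" "\<beta>!k' \<notin> set (take k0 \<beta>)"
        unfolding T_R_def using al by auto
      then have "k0 = k" using kk al by (simp add: nth_eq_iff_index_eq)
      moreover have "\<beta>!k' \<in> set (take k \<beta>)" using kk al by (auto simp: in_set_conv_nth)
      ultimately show False using k0 by simp
    qed
    then show "R $$ (\<beta>!k, \<beta>!k') = 0" using RE(2)[of "\<beta>!k" "\<beta>!k'"] bn[of k] bn[of k'] kk ne by simp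
  qed
  show "\<And>i j. i < m \<Longrightarrow> j < m \<Longrightarrow> j \<notin> set \<alpha> \<Longrightarrow> L $$ (i,j) = (if i = j then 1 else 0)"
  proof -
    fix i j assume "i < m" "j < m" "j \<notin> set \<alpha>"
    then show "L $$ (i,j) = (if i = j then 1 else 0)" using LE(2)[of i j] by (simp add: T_L_def)
  qed
  show "\<And>i j. i < n \<Longrightarrow> j < n \<Longrightarrow> i \<notin> set \<beta> \<Longrightarrow> R $$ (i,j) = (if i = j then 1 else 0)"
  proof -
    fix i j assume "i < n" "j < n" "i \<notin> set \<beta>"
    moreover have "(i,j) \<notin> T_R \<beta>" using \<open>i \<notin> set \<beta>\<close> unfolding T_R_def by auto
    ultimately show "R $$ (i,j) = (if i = j then 1 else 0)" using RE(2)[of i j] by simp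
  qed
qed

theorem theorem4:
  fixes m n r r' :: nat and \<alpha> \<beta> \<alpha>' \<beta>' :: "nat list" and L R L' R' :: "bit mat"
  assumes "allowed m n r \<alpha> \<beta> L R"
    and "allowed m n r' \<alpha>' \<beta>' L' R'"
    and "L * Pi_mat m n \<alpha> \<beta> * R = L' * Pi_mat m n \<alpha>' \<beta>' * R'"
  shows "(r, \<alpha>, \<beta>, L, R) = (r', \<alpha>', \<beta>', L', R')"
proof -
  have al: "r \<le> min m n" "length \<alpha> = r" "set \<alpha> \<subseteq> {0..<m}" "sorted_wrt (<) \<alpha>"
     "length \<beta> = r" "set \<beta> \<subseteq> {0..<n}" "distinct \<beta>"
    using assms(1) unfolding allowed_def by auto
  have al': "r' \<le> min m n" "length \<alpha>' = r'" "set \<alpha>' \<subseteq> {0..<m}" "sorted_wrt (<) \<alpha>'"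
     "length \<beta>' = r'" "set \<beta>' \<subseteq> {0..<n}" "distinct \<beta>'"
    using assms(2) unfolding allowed_def by auto
  note D = data_props[OF assms(1)] and D' = data_props[OF assms(2)]
  define c where "c i k = L $$ (i, \<alpha>!k)" for i k
  define v where "v k j = R $$ (\<beta>!k, j)" for k j
  define c' where "c' i k = L' $$ (i, \<alpha>'!k)" for i k
  define v' where "v' k j = R' $$ (\<beta>'!k, j)" for k j
  have X: "(\<Sum>k<r. c i k * v k j) = (\<Sum>k<r'. c' i k * v' k j)" if "i < m" "j < n" for i j
    using prod_entry[OF D(1,2) al(2,5,3,6) that] prod_entry[OF D'(1,2) al'(2,5,3,6) that] assms(3)
    unfolding c_def v_def c'_def v'_def by simp
  have X': "(\<Sum>k<r'. c' i k * v' k j) = (\<Sum>k<r. c i k * v k j)" if "i < m" "j < n" for i j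
    using X[OF that] by simp
  let ?ag = "\<lambda>k. \<alpha>!k = \<alpha>'!k \<and> \<beta>!k = \<beta>'!k \<and> (\<forall>j<n. v k j = v' k j) \<and> (\<forall>i<m. c i k = c' i k)"
  have C1: "\<And>k. k < r \<Longrightarrow> c (\<alpha>!k) k = 1" unfolding c_def by (rule D(3))
  have C0: "\<And>k i. k < r \<Longrightarrow> i < \<alpha>!k \<Longrightarrow> c i k = 0" unfolding c_def by (rule D(4))
  have V1: "\<And>k. k < r \<Longrightarrow> v k (\<beta>!k) = 1" unfolding v_def by (rule D(5))
  have V0: "\<And>k j. k < r \<Longrightarrow> \<beta>!k < j \<Longrightarrow> j < n \<Longrightarrow> v k j = 0" unfolding v_def by (rule D(6))
  have VP: "\<And>k k'. k < r \<Longrightarrow> k' < k \<Longrightarrow> v k (\<beta>!k') = 0" unfolding v_def by (rule D(7))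
  have C1': "\<And>k. k < r' \<Longrightarrow> c' (\<alpha>'!k) k = 1" unfolding c'_def by (rule D'(3))
  have C0': "\<And>k i. k < r' \<Longrightarrow> i < \<alpha>'!k \<Longrightarrow> c' i k = 0" unfolding c'_def by (rule D'(4))
  have V1': "\<And>k. k < r' \<Longrightarrow> v' k (\<beta>'!k) = 1" unfolding v'_def by (rule D'(5))
  have V0': "\<And>k j. k < r' \<Longrightarrow> \<beta>'!k < j \<Longrightarrow> j < n \<Longrightarrow> v' k j = 0" unfolding v'_def by (rule D'(6))
  have VP': "\<And>k k'. k < r' \<Longrightarrow> k' < k \<Longrightarrow> v' k (\<beta>'!k') = 0" unfolding v'_def by (rule D'(7))
  note facts = al al' C1 C0 V1 V0 VP C1' C0' V1' V0' VP'
  have agree: "\<forall>k'<k. ?ag k'" if "k \<le> r" "k \<le> r'" for k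
    using that
  proof (induction k)
    case 0 then show ?case by simp
  next
    case (Suc k)
    then have kr: "k < r" and kr': "k \<le> r'" by auto
    have IH: "\<forall>k'<k. ?ag k'" using Suc.IH kr kr' by simp
    have "k < r' \<and> ?ag k"
      by (rule key_step[where c=c and c'=c' and v=v and v'=v' and a=\<alpha> and a'=\<alpha>' and b=\<beta> and b'=\<beta>' and r=r and r'=r' and m=m and n=n and k=k])
        (assumption | rule facts X kr kr' IH[rule_format])+
    then show ?case using Suc by (auto simp: less_Suc_eq)
  qed
  have rr: "r = r'"
  proof (rule ccontr)
    assume "r \<noteq> r'"
    then consider "r < r'" | "r' < r" by linarith
    then show False
    proof cases
      case 1
      have IH: "\<forall>k'<r. \<alpha>'!k' = \<alpha>!k' \<and> \<beta>'!k' = \<beta>!k' \<and> (\<forall>j<n. v' k' j = v k' j) \<and> (\<forall>i<m. c' i k' = c i k')"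
        using agree[of r] 1 by simp
      have "r < r \<and> True"
        by (rule conjI[OF conjunct1 TrueI], rule key_step[where c=c' and c'=c and v=v' and v'=v and a=\<alpha>' and a'=\<alpha> and b=\<beta>' and b'=\<beta> and r=r' and r'=r and m=m and n=n and k=r])
          (assumption | rule facts X' 1 order.refl IH[rule_format])+
      then show False by simp
    next
      case 2
      have IH: "\<forall>k'<r'. ?ag k'" using agree[of r'] 2 by simp
      have "r' < r' \<and> True"
        by (rule conjI[OF conjunct1 TrueI], rule key_step[where c=c and c'=c' and v=v and v'=v' and a=\<alpha> and a'=\<alpha>' and b=\<beta> and b'=\<beta>' and r=r and r'=r' and m=m and n=n and k=r'])
          (assumption | rule facts X 2 order.refl IH[rule_format])+
      then show False by simp
    qed
  qed
  have ag: "\<And>k. k < r \<Longrightarrow> ?ag k" using agree[of r] rr by auto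
  have aa: "\<alpha> = \<alpha>'" using ag al al' rr by (intro nth_equalityI) auto
  have bb: "\<beta> = \<beta>'" using ag al al' rr by (intro nth_equalityI) auto
  have LL: "L = L'"
  proof (rule eq_matI)
    show "dim_row L = dim_row L'" "dim_col L = dim_col L'" using D(1) D'(1) by auto
    fix i j assume ij: "i < dim_row L'" "j < dim_col L'"
    then have ij: "i < m" "j < m" using D'(1) by auto
    show "L $$ (i,j) = L' $$ (i,j)"
    proof (cases "j \<in> set \<alpha>")
      case True
      then obtain k where k: "k < r" "j = \<alpha>!k" using al by (auto simp: in_set_conv_nth)
      then show ?thesis using ag[OF k(1)] ij aa unfolding c_def c'_def by simp
    next
      case False
      then show ?thesis using D(8)[OF ij False] D'(8)[OF ij] aa by simp
    qed
  qed
  have RR: "R = R'"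
  proof (rule eq_matI)
    show "dim_row R = dim_row R'" "dim_col R = dim_col R'" using D(2) D'(2) by auto
    fix i j assume ij: "i < dim_row R'" "j < dim_col R'"
    then have ij: "i < n" "j < n" using D'(2) by auto
    show "R $$ (i,j) = R' $$ (i,j)"
    proof (cases "i \<in> set \<beta>")
      case True
      then obtain k where k: "k < r" "i = \<beta>!k" using al by (auto simp: in_set_conv_nth)
      then show ?thesis using ag[OF k(1)] ij bb unfolding v_def v'_def by simp
    next
      case False
      then show ?thesis using D(9)[OF ij False] D'(9)[OF ij] bb by simp
    qed
  qed
  show ?thesis using rr aa bb LL RR by simp
qed

end
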